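(* Let $W_1,\ldots,W_f$ be mutually quasi-unbiased weighing matrices for parameters $(nm,k,k^2,1)$, and assume that $W_i(I_n\otimes J_m)$ is a $(0,1,-1)$-matrix for every $i\in\{1,\ldots,f\}$. Let $K$ be an orthogonal design of order $m$ and type $(s_1,\ldots,s_u)$ in variables $x_1,\ldots,x_u$. Then there exist $f$ mutually unbiased orthogonal designs of order $nm$ and type $(ks_1,\ldots,ks_u)$ with parameter $\alpha=k^2$.
   Context: $J_m$ is the $m\times m$ all-ones matrix. A weighing matrix of order $N$ and weight $k$ is an $N\times N$ $(0,1,-1)$-matrix $W$ with $WW^\top=kI_N$; weighing matrices $W_1,W_2$ of order $N$ and weight $k$ are quasi-unbiased for parameters $(N,k,l,a)$ if $\frac1{\sqrt a}W_1W_2^\top$ is a weighing matrix of order $N$ and weight $l$; mutually quasi-unbiased means pairwise. An orthogonal design of order $N$ and type $(t_1,\ldots,t_u)$ in distinct commuting real indeterminates $x_1,\ldots,x_u$ is an $N\times N$ matrix $D$ with entries in $\{0,\pm x_1,\ldots,\pm x_u\}$ with $DD^\top=(t_1x_1^2+\cdots+t_ux_u^2)I_N$. Orthogonal designs of the same order and type $(t_1,\ldots,t_u)$ in the same variables are mutually unbiased with parameter $\alpha$ if $\alpha>0$ and for any two distinct members $D,D'$ there is a $(0,1,-1)$-matrix $V$ with $DD'^\top=\frac{t_1x_1^2+\cdots+t_ux_u^2}{\sqrt\alpha}V$. *)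

theory Defs
  imports Complex_Main
begin

text \<open>Square matrices of order N are functions nat => nat => 'a, only the
entries with indices < N are relevant (0-based indices).\<close>

definition mat_mult_T :: "nat \<Rightarrow> (nat \<Rightarrow> nat \<Rightarrow> 'a::comm_semiring_0) \<Rightarrow> (nat \<Rightarrow> nat \<Rightarrow> 'a) \<Rightarrow> nat \<Rightarrow> nat \<Rightarrow> 'a"
  where "mat_mult_T N A B r c = (\<Sum>l<N. A r l * B c l)"

definition zpm_matrix :: "nat \<Rightarrow> (nat \<Rightarrow> nat \<Rightarrow> 'a::{one,uminus,zero}) \<Rightarrow> bool"
  where "zpm_matrix N A \<longleftrightarrow> (\<forall>r<N. \<forall>c<N. A r c \<in> {0, 1, -1})"

definition weighing_matrix :: "nat \<Rightarrow> nat \<Rightarrow> (nat \<Rightarrow> nat \<Rightarrow> real) \<Rightarrow> bool"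
  where "weighing_matrix N k W \<longleftrightarrow> zpm_matrix N W \<and>
     (\<forall>r<N. \<forall>c<N. mat_mult_T N W W r c = (if r = c then real k else 0))"

definition quasi_unbiased :: "nat \<Rightarrow> nat \<Rightarrow> nat \<Rightarrow> real \<Rightarrow> (nat \<Rightarrow> nat \<Rightarrow> real) \<Rightarrow> (nat \<Rightarrow> nat \<Rightarrow> real) \<Rightarrow> bool"
  where "quasi_unbiased N k l a W1 W2 \<longleftrightarrow> weighing_matrix N k W1 \<and> weighing_matrix N k W2 \<and>
     weighing_matrix N l (\<lambda>r c. mat_mult_T N W1 W2 r c / sqrt a)"

definition I_kron_J :: "nat \<Rightarrow> nat \<Rightarrow> nat \<Rightarrow> real"
  where "I_kron_J m p q = (if p div m = q div m then 1 else 0)"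

definition mat_mult :: "nat \<Rightarrow> (nat \<Rightarrow> nat \<Rightarrow> 'a::comm_semiring_0) \<Rightarrow> (nat \<Rightarrow> nat \<Rightarrow> 'a) \<Rightarrow> nat \<Rightarrow> nat \<Rightarrow> 'a"
  where "mat_mult N A B r c = (\<Sum>l<N. A r l * B l c)"

text \<open>An entry is a
linear form given by its integer coefficient vector over the variables; it must be
0 or \<plusminus>x_j for some j<u.  Identities between polynomials in the commuting real
indeterminates are expressed as identities for all real values of the variables.\<close>

definition od_entry :: "nat \<Rightarrow> (nat \<Rightarrow> int) \<Rightarrow> bool"
  where "od_entry u e \<longleftrightarrow> (\<forall>j. e j \<in> {0, 1, -1}) \<and> (\<forall>j\<ge>u. e j = 0) \<and>
     (\<forall>i j. e i \<noteq> 0 \<longrightarrow> e j \<noteq> 0 \<longrightarrow> i = j)"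

definition od_eval :: "nat \<Rightarrow> (nat \<Rightarrow> nat \<Rightarrow> nat \<Rightarrow> int) \<Rightarrow> (nat \<Rightarrow> real) \<Rightarrow> nat \<Rightarrow> nat \<Rightarrow> real"
  where "od_eval u D x r c = (\<Sum>j<u. of_int (D r c j) * x j)"

definition od_form :: "nat \<Rightarrow> (nat \<Rightarrow> nat) \<Rightarrow> (nat \<Rightarrow> real) \<Rightarrow> real"
  where "od_form u t x = (\<Sum>j<u. real (t j) * (x j)\<^sup>2)"

definition orthogonal_design :: "nat \<Rightarrow> nat \<Rightarrow> (nat \<Rightarrow> nat) \<Rightarrow> (nat \<Rightarrow> nat \<Rightarrow> nat \<Rightarrow> int) \<Rightarrow> bool"
  where "orthogonal_design N u t D \<longleftrightarrow>
     (\<forall>r<N. \<forall>c<N. od_entry u (D r c)) \<and>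
     (\<forall>x. \<forall>r<N. \<forall>c<N. mat_mult_T N (od_eval u D x) (od_eval u D x) r c
                        = (if r = c then od_form u t x else 0))"

definition mutually_unbiased_ODs :: "nat \<Rightarrow> nat \<Rightarrow> (nat \<Rightarrow> nat) \<Rightarrow> real \<Rightarrow> nat \<Rightarrow> (nat \<Rightarrow> nat \<Rightarrow> nat \<Rightarrow> nat \<Rightarrow> int) \<Rightarrow> bool"
  where "mutually_unbiased_ODs N u t \<alpha> f D \<longleftrightarrow> \<alpha> > 0 \<and>
     (\<forall>i<f. orthogonal_design N u t (D i)) \<and>
     (\<forall>i<f. \<forall>j<f. i \<noteq> j \<longrightarrow> (\<exists>V :: nat \<Rightarrow> nat \<Rightarrow> int. zpm_matrix N V \<and>
        (\<forall>x. \<forall>r<N. \<forall>c<N. mat_mult_T N (od_eval u (D i) x) (od_eval u (D j) x) r c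
                 = od_form u t x / sqrt \<alpha> * of_int (V r c))))"

end

theory Submission imports Defs "Jordan_Normal_Form.Determinant" begin

lemma col_orth:
  assumes W: "weighing_matrix N k W" and k: "0 < k" and a: "a < N" and b: "b < N"
  shows "(\<Sum>r<N. W r a * W r b) = (if a = b then real k else 0)"
proof -
  define A where "A = mat N N (\<lambda>(i,j). W i j)"
  define B where "B = mat N N (\<lambda>(i,j). W j i / real k)"
  have A: "A \<in> carrier_mat N N" and B: "B \<in> carrier_mat N N" by (auto simp: A_def B_def)
  have "A * B = 1\<^sub>m N"
  proof (rule eq_matI)
    fix i j assume ij: "i < dim_row (1\<^sub>m N)" "j < dim_col (1\<^sub>m N)"
    have "(A * B) $$ (i,j) = (\<Sum>l<N. W i l * (W j l / real k))"
      using ij by (simp add: A_def B_def scalar_prod_def lessThan_atLeast0)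
    also have "\<dots> = mat_mult_T N W W i j / real k"
      by (simp add: mat_mult_T_def sum_divide_distrib)
    also have "\<dots> = (if i = j then 1 else 0)" using W ij k unfolding weighing_matrix_def by auto
    finally show "(A * B) $$ (i,j) = 1\<^sub>m N $$ (i,j)" using ij by simp
  qed (auto simp: A_def B_def)
  hence BA: "B * A = 1\<^sub>m N" using mat_mult_left_right_inverse[OF A B] by blast
  have "(B * A) $$ (a,b) = (\<Sum>r<N. W r a / real k * W r b)"
    using a b by (simp add: A_def B_def scalar_prod_def lessThan_atLeast0)
  also have "\<dots> = (\<Sum>r<N. W r a * W r b) / real k"
    by (simp add: sum_divide_distrib)
  finally show ?thesis using BA a b k by (auto split: if_splits simp: field_simps)
qed

lemma sum_blocks: fixes n m :: nat shows "(\<Sum>l<n*m. g l) = (\<Sum>b<n. \<Sum>q<m. (g (b*m+q) :: 'a::comm_monoid_add))"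
proof (induction n)
  case 0 then show ?case by simp
next
  case (Suc n)
  have "(\<Sum>l<Suc n*m. g l) = (\<Sum>l<n*m. g l) + (\<Sum>l\<in>{n*m..<n*m+m}. g l)"
    by (simp add: add.commute sum.atLeastLessThan_concat[symmetric] lessThan_atLeast0)
  also have "(\<Sum>l\<in>{n*m..<n*m+m}. g l) = (\<Sum>q<m. g (n*m+q))"
    using sum.shift_bounds_nat_ivl[of g 0 "n*m" m] by (simp add: lessThan_atLeast0 add.commute add.left_commute)
  finally show ?case using Suc by simp
qed

lemma idx_lt: fixes b q n m :: nat assumes "b < n" "q < m" shows "b*m+q < n*m"
proof -
  have "b*m+q < b*m+m" using assms by simp
  also have "\<dots> = (b+1)*m" by simp
  also have "\<dots> \<le> n*m" using assms by (intro mult_right_mono) auto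
  finally show ?thesis .
qed

lemma idx_div: fixes b q m :: nat assumes "q < m" shows "(b*m+q) div m = b" "(b*m+q) mod m = q"
  using assms by auto

lemma block_unique:
  fixes n m k :: nat and W :: "nat \<Rightarrow> nat \<Rightarrow> real"
  assumes W: "weighing_matrix (n*m) k W" and k: "0 < k"
    and kron: "zpm_matrix (n*m) (mat_mult (n*m) W (I_kron_J m))"
    and r0: "r0 < n*m" and b0: "b0 < n" and q1: "q1 < m" and q2: "q2 < m"
    and nz1: "W r0 (b0*m+q1) \<noteq> 0" and nz2: "W r0 (b0*m+q2) \<noteq> 0"
  shows "q1 = q2"
proof (rule ccontr)
  assume neq: "q1 \<noteq> q2"
  define N where "N = n*m"
  have m: "0 < m" using q1 by simp
  have zpm: "\<And>r l. r < N \<Longrightarrow> l < N \<Longrightarrow> W r l \<in> {0,1,-1}"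
    using W unfolding weighing_matrix_def zpm_matrix_def N_def by blast
  define beta where "beta r b = (\<Sum>q<m. W r (b*m+q))" for r b
  define c where "c r b = (\<Sum>q<m. (W r (b*m+q))^2)" for r b
  have beta_vals: "beta r b \<in> {0,1,-1}" if "r < N" "b < n" for r b
  proof -
    have bm: "b*m < N" using idx_lt[OF that(2) m] by (simp add: N_def)
    have "mat_mult N W (I_kron_J m) r (b*m) = (\<Sum>l<n*m. W r l * (if l div m = b then 1 else 0))"
      using m by (simp add: mat_mult_def I_kron_J_def N_def)
    also have "\<dots> = (\<Sum>b'<n. \<Sum>q<m. W r (b'*m+q) * (if (b'*m+q) div m = b then 1 else 0))"
      by (rule sum_blocks)
    also have "\<dots> = (\<Sum>b'<n. if b' = b then beta r b' else 0)"
      by (intro sum.cong refl) (auto simp: beta_def idx_div)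
    also have "\<dots> = beta r b" using that by simp
    finally show ?thesis using kron that bm unfolding zpm_matrix_def N_def by metis
  qed
  have wsq: "(W r l)^2 = (if W r l = 0 then 0 else 1)" if "r < N" "l < N" for r l
    using zpm[OF that] by auto
  have rowk: "(\<Sum>b<n. c r b) = real k" if "r < N" for r
  proof -
    have "(\<Sum>b<n. c r b) = (\<Sum>l<n*m. (W r l)^2)"
      unfolding c_def by (rule sum_blocks[symmetric])
    also have "\<dots> = mat_mult_T N W W r r" by (simp add: mat_mult_T_def N_def power2_eq_square)
    also have "\<dots> = real k" using W that unfolding weighing_matrix_def N_def by auto
    finally show ?thesis .
  qed
  have le: "(beta r b)^2 \<le> c r b" if "r < N" "b < n" for r b
  proof (cases "beta r b = 0")
    case True then show ?thesis by (simp add: c_def sum_nonneg)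
  next
    case False
    then obtain q where q: "q < m" "W r (b*m+q) \<noteq> 0" unfolding beta_def
      by (meson sum.neutral lessThan_iff)
    have "1 = (W r (b*m+q))^2" using wsq[OF that(1)] q idx_lt[OF that(2) q(1)] N_def by simp
    also have "\<dots> \<le> c r b" unfolding c_def by (rule member_le_sum) (use q in auto)
    finally show ?thesis using beta_vals[OF that] by auto
  qed
  have lt: "(beta r0 b0)^2 < c r0 b0"
  proof -
    have "(beta r0 b0)^2 \<le> 1" using beta_vals[OF r0[folded N_def] b0] by auto
    also have "\<dots> < 2" by simp
    also have "2 = (\<Sum>q\<in>{q1,q2}. (W r0 (b0*m+q))^2)"
      using neq wsq r0 idx_lt[OF b0 q1] idx_lt[OF b0 q2] nz1 nz2 by (simp add: N_def)
    also have "\<dots> \<le> c r0 b0" unfolding c_def by (rule sum_mono2) (use q1 q2 in auto)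
    finally show ?thesis .
  qed
  have total: "(\<Sum>r<N. \<Sum>b<n. (beta r b)^2) = real N * real k"
  proof -
    have "(\<Sum>r<N. \<Sum>b<n. (beta r b)^2)
        = (\<Sum>r<N. \<Sum>b<n. \<Sum>q<m. \<Sum>q'<m. W r (b*m+q) * W r (b*m+q'))"
      by (simp add: beta_def power2_eq_square sum_product)
    also have "\<dots> = (\<Sum>b<n. \<Sum>q<m. \<Sum>q'<m. \<Sum>r<N. W r (b*m+q) * W r (b*m+q'))"
      by (simp add: sum.swap[of _ "{..<N}"])
    also have "\<dots> = (\<Sum>b<n. \<Sum>q<m. \<Sum>q'<m. if q = q' then real k else 0)"
    proof (intro sum.cong refl)
      fix b q q' assume "b \<in> {..<n}" "q \<in> {..<m}" "q' \<in> {..<m}"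
      then show "(\<Sum>r<N. W r (b*m+q) * W r (b*m+q')) = (if q = q' then real k else 0)"
        using col_orth[OF W[folded N_def] k, of "b*m+q" "b*m+q'"] idx_lt[of b n q m] idx_lt[of b n q' m]
        by (auto simp: N_def)
    qed
    also have "\<dots> = real n * real m * real k" by simp
    finally show ?thesis by (simp add: N_def)
  qed
  have "(\<Sum>r<N. \<Sum>b<n. (beta r b)^2) < (\<Sum>r<N. \<Sum>b<n. c r b)"
  proof (rule sum_strict_mono_ex1)
    show "\<forall>r\<in>{..<N}. (\<Sum>b<n. (beta r b)^2) \<le> (\<Sum>b<n. c r b)"
      using le by (auto intro: sum_mono)
    show "\<exists>r\<in>{..<N}. (\<Sum>b<n. (beta r b)^2) < (\<Sum>b<n. c r b)"
    proof (intro bexI[of _ r0])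
      show "(\<Sum>b<n. (beta r0 b)^2) < (\<Sum>b<n. c r0 b)"
        using r0 b0 le lt by (intro sum_strict_mono_ex1[where A="{..<n}"]) (auto simp: N_def)
    qed (use r0 N_def in auto)
  qed simp
  also have "\<dots> = real N * real k" using rowk by simp
  finally show False using total by simp
qed

definition toint :: "real \<Rightarrow> int" where
  "toint y = (if y = 1 then 1 else if y = -1 then -1 else 0)"

lemma of_int_toint: "y \<in> {0,1,-1} \<Longrightarrow> of_int (toint y) = y"
  by (auto simp: toint_def)

lemma toint_vals: "toint y \<in> {0,1,-1}" by (simp add: toint_def)

lemma toint_zero: "y \<in> {0,1,-1} \<Longrightarrow> toint y = 0 \<longleftrightarrow> y = 0"
  by (auto simp: toint_def)

lemma od_entry_scale: "od_entry u e \<Longrightarrow> a \<in> {0,1,-1::int} \<Longrightarrow> od_entry u (\<lambda>j. a * e j)"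
  unfolding od_entry_def by auto

lemma sum_single:
  assumes "finite A" "q0 \<in> A" "\<And>q. q \<in> A \<Longrightarrow> q \<noteq> q0 \<Longrightarrow> f q = 0"
  shows "sum f A = (f q0 :: 'a::comm_monoid_add)"
proof -
  have "sum f A = f q0 + sum f (A - {q0})" using assms by (simp add: sum.remove)
  also have "sum f (A - {q0}) = 0" using assms by (intro sum.neutral) auto
  finally show ?thesis by simp
qed

lemma div_lt: fixes c n m :: nat assumes "c < n*m" shows "c div m < n"
  using assms by (metis less_mult_imp_div_less mult.commute)


theorem proposition4p7:
  fixes n m k f u :: nat
    and W :: "nat \<Rightarrow> nat \<Rightarrow> nat \<Rightarrow> real"
    and K :: "nat \<Rightarrow> nat \<Rightarrow> nat \<Rightarrow> int"
    and s :: "nat \<Rightarrow> nat"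
  assumes k_pos: "0 < k"
    and W_weighing: "\<forall>i<f. weighing_matrix (n * m) k (W i)"
    and W_qu: "\<forall>i<f. \<forall>j<f. i \<noteq> j \<longrightarrow> quasi_unbiased (n * m) k (k ^ 2) 1 (W i) (W j)"
    and W_kron: "\<forall>i<f. zpm_matrix (n * m) (mat_mult (n * m) (W i) (I_kron_J m))"
    and K_od: "orthogonal_design m u s K"
  shows "\<exists>D. mutually_unbiased_ODs (n * m) u (\<lambda>j. k * s j) (real (k ^ 2)) f D"
proof (cases "m = 0")
  case True
  then show ?thesis using k_pos
    by (auto simp: mutually_unbiased_ODs_def orthogonal_design_def zpm_matrix_def)
next
  case False
  hence m: "0 < m" by simp
  define N where "N = n*m"
  define D where "D i r c j = (\<Sum>q<m. toint (W i r ((c div m)*m+q)) * K q (c mod m) j)" for i r c j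
  have zpmW: "W i r l \<in> {0,1,-1}" if "i < f" "r < N" "l < N" for i r l
    using W_weighing that unfolding weighing_matrix_def zpm_matrix_def N_def by blast
  have cb: "c div m < n" "c mod m < m" if "c < N" for c
    using that m div_lt[of c n m] by (auto simp: N_def)
  have ix: "(c div m)*m+q < N" if "c < N" "q < m" for c q
    using idx_lt[OF cb(1)[OF that(1)] that(2)] by (simp add: N_def)
  have eval_D: "od_eval u (D i) x r c = (\<Sum>q<m. W i r ((c div m)*m+q) * od_eval u K x q (c mod m))"
    if "i < f" "r < N" "c < N" for i x r c
  proof -
    have "od_eval u (D i) x r c = (\<Sum>j<u. \<Sum>q<m. of_int (toint (W i r ((c div m)*m+q))) * (of_int (K q (c mod m) j) * x j))"
      by (simp add: od_eval_def D_def sum_distrib_right mult.assoc)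
    also have "\<dots> = (\<Sum>q<m. \<Sum>j<u. W i r ((c div m)*m+q) * (of_int (K q (c mod m) j) * x j))"
      by (subst sum.swap) (intro sum.cong refl, simp add: of_int_toint[OF zpmW[OF that(1,2) ix[OF that(3)]]])
    also have "\<dots> = (\<Sum>q<m. W i r ((c div m)*m+q) * od_eval u K x q (c mod m))"
      by (simp add: od_eval_def sum_distrib_left)
    finally show ?thesis .
  qed
  have entry: "od_entry u (D i r c)" if irc: "i < f" "r < N" "c < N" for i r c
  proof -
    define b where "b = c div m"
    have b: "b < n" using cb[OF irc(3)] by (simp add: b_def)
    obtain q0 where q0: "q0 < m" and oth: "\<And>q. q < m \<Longrightarrow> q \<noteq> q0 \<Longrightarrow> W i r (b*m+q) = 0"
    proof (cases "\<exists>q<m. W i r (b*m+q) \<noteq> 0")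
      case True
      then obtain q0 where "q0 < m" "W i r (b*m+q0) \<noteq> 0" by blast
      then show ?thesis using block_unique[OF W_weighing[rule_format, OF irc(1)] k_pos
          W_kron[rule_format, OF irc(1)] irc(2)[unfolded N_def] b]
        by (intro that[of q0]) blast+
    next
      case False then show ?thesis using m by (intro that[of 0]) auto
    qed
    have "D i r c = (\<lambda>j. toint (W i r (b*m+q0)) * K q0 (c mod m) j)"
    proof
      fix j show "D i r c j = toint (W i r (b*m+q0)) * K q0 (c mod m) j"
        unfolding D_def b_def[symmetric]
        by (rule sum_single) (use q0 oth in \<open>auto simp: toint_def\<close>)
    qed
    moreover have "od_entry u (K q0 (c mod m))"
      using K_od q0 cb[OF irc(3)] unfolding orthogonal_design_def by blast
    ultimately show ?thesis using od_entry_scale toint_vals by metis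
  qed
  have prod: "mat_mult_T N (od_eval u (D i) x) (od_eval u (D j) x) r r'
      = od_form u s x * mat_mult_T N (W i) (W j) r r'"
    if ij: "i < f" "j < f" "r < N" "r' < N" for i j x r r'
  proof -
    define E where "E = od_eval u K x"
    define F where "F = od_form u s x"
    have KK: "(\<Sum>t<m. E q t * E q' t) = (if q = q' then F else 0)" if "q < m" "q' < m" for q q'
      using K_od that unfolding orthogonal_design_def E_def F_def mat_mult_T_def by blast
    have "mat_mult_T N (od_eval u (D i) x) (od_eval u (D j) x) r r'
        = (\<Sum>b<n. \<Sum>t<m. od_eval u (D i) x r (b*m+t) * od_eval u (D j) x r' (b*m+t))"
      unfolding mat_mult_T_def N_def by (rule sum_blocks)
    also have "\<dots> = (\<Sum>b<n. \<Sum>t<m. (\<Sum>q<m. W i r (b*m+q) * E q t) * (\<Sum>q'<m. W j r' (b*m+q') * E q' t))"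
    proof (intro sum.cong refl)
      fix b t assume bt: "b \<in> {..<n}" "t \<in> {..<m}"
      hence c: "b*m+t < N" using idx_lt[of b n t m] by (simp add: N_def)
      show "od_eval u (D i) x r (b*m+t) * od_eval u (D j) x r' (b*m+t)
          = (\<Sum>q<m. W i r (b*m+q) * E q t) * (\<Sum>q'<m. W j r' (b*m+q') * E q' t)"
        using eval_D[OF ij(1,3) c, of x] eval_D[OF ij(2,4) c, of x] bt by (simp add: E_def)
    qed
    also have "\<dots> = (\<Sum>b<n. \<Sum>t<m. \<Sum>q<m. \<Sum>q'<m. (W i r (b*m+q) * W j r' (b*m+q')) * (E q t * E q' t))"
      by (simp only: sum_product) (intro sum.cong refl, simp only: mult_ac)
    also have "\<dots> = (\<Sum>b<n. \<Sum>q<m. \<Sum>q'<m. (W i r (b*m+q) * W j r' (b*m+q')) * (\<Sum>t<m. E q t * E q' t))"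
    proof (rule sum.cong[OF refl])
      fix b
      have "(\<Sum>t<m. \<Sum>q<m. \<Sum>q'<m. (W i r (b*m+q) * W j r' (b*m+q')) * (E q t * E q' t))
          = (\<Sum>q<m. \<Sum>t<m. \<Sum>q'<m. (W i r (b*m+q) * W j r' (b*m+q')) * (E q t * E q' t))"
        by (rule sum.swap)
      also have "\<dots> = (\<Sum>q<m. \<Sum>q'<m. \<Sum>t<m. (W i r (b*m+q) * W j r' (b*m+q')) * (E q t * E q' t))"
        by (rule sum.cong[OF refl], rule sum.swap)
      also have "\<dots> = (\<Sum>q<m. \<Sum>q'<m. (W i r (b*m+q) * W j r' (b*m+q')) * (\<Sum>t<m. E q t * E q' t))"
        by (simp only: sum_distrib_left)
      finally show "(\<Sum>t<m. \<Sum>q<m. \<Sum>q'<m. (W i r (b*m+q) * W j r' (b*m+q')) * (E q t * E q' t))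
          = (\<Sum>q<m. \<Sum>q'<m. (W i r (b*m+q) * W j r' (b*m+q')) * (\<Sum>t<m. E q t * E q' t))" .
    qed
    also have "\<dots> = (\<Sum>b<n. \<Sum>q<m. \<Sum>q'<m. (W i r (b*m+q) * W j r' (b*m+q')) * (if q = q' then F else 0))"
      by (intro sum.cong refl) (simp add: KK)
    also have "\<dots> = (\<Sum>b<n. \<Sum>q<m. W i r (b*m+q) * W j r' (b*m+q) * F)"
      by (simp add: if_distrib cong: if_cong)
    also have "\<dots> = F * (\<Sum>b<n. \<Sum>q<m. W i r (b*m+q) * W j r' (b*m+q))"
      by (simp add: sum_distrib_left mult_ac)
    also have "\<dots> = F * (\<Sum>l<n*m. W i r l * W j r' l)"
      by (simp only: sum_blocks)
    finally show ?thesis by (simp add: F_def mat_mult_T_def N_def)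
  qed
  have form_scale: "od_form u (\<lambda>j. k * s j) x = real k * od_form u s x" for x
    by (simp add: od_form_def sum_distrib_left mult_ac)
  have sq: "sqrt (real (k^2)) = real k" by simp
  have "mutually_unbiased_ODs N u (\<lambda>j. k * s j) (real (k ^ 2)) f D"
    unfolding mutually_unbiased_ODs_def
  proof (intro conjI allI impI)
    show "0 < real (k^2)" using k_pos by simp
  next
    fix i assume i: "i < f"
    show "orthogonal_design N u (\<lambda>j. k * s j) (D i)"
      unfolding orthogonal_design_def
    proof (intro conjI allI impI)
      fix r c assume "r < N" "c < N"
      then show "od_entry u (D i r c)" using entry i by blast
    next
      fix x r c assume rc: "r < N" "c < N"
      have "mat_mult_T N (W i) (W i) r c = (if r = c then real k else 0)"
        using W_weighing i rc unfolding weighing_matrix_def N_def by blast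
      then show "mat_mult_T N (od_eval u (D i) x) (od_eval u (D i) x) r c
          = (if r = c then od_form u (\<lambda>j. k * s j) x else 0)"
        using prod[OF i i rc] form_scale by (simp add: mult_ac)
    qed
  next
    fix i j assume ij: "i < f" "j < f" "i \<noteq> j"
    define V where "V r c = toint (mat_mult_T N (W i) (W j) r c)" for r c
    have Mv: "mat_mult_T N (W i) (W j) r c \<in> {0,1,-1}" if "r < N" "c < N" for r c
      using W_qu ij that unfolding quasi_unbiased_def weighing_matrix_def zpm_matrix_def N_def
      by auto
    show "\<exists>V. zpm_matrix N V \<and> (\<forall>x. \<forall>r<N. \<forall>c<N.
        mat_mult_T N (od_eval u (D i) x) (od_eval u (D j) x) r c
          = od_form u (\<lambda>j. k * s j) x / sqrt (real (k^2)) * of_int (V r c))"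
    proof (intro exI[of _ V] conjI allI impI)
      show "zpm_matrix N V" unfolding zpm_matrix_def V_def using toint_vals by auto
    next
      fix x r c assume rc: "r < N" "c < N"
      show "mat_mult_T N (od_eval u (D i) x) (od_eval u (D j) x) r c
          = od_form u (\<lambda>j. k * s j) x / sqrt (real (k^2)) * of_int (V r c)"
        using prod[OF ij(1,2) rc] form_scale k_pos unfolding sq V_def of_int_toint[OF Mv[OF rc]]
        by simp
    qed
  qed
  then show ?thesis unfolding N_def by blast
qed
end
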